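(* Let $S=(U,F)$ be an undirected graph on $q$ nodes, possibly with self-loops, and let $n'$ be a nonnegative integer. Let $A'\in\mathcal{A}(S)$ be such that $n'A'$ is integer-valued and $\operatorname{diag}A'=0$, and set $x'=A'\mathbf{1}$. Then the directed graph $\vec G'$, where $G'=M(n'x',S)$, admits a Hamiltonian decomposition $H'$ with $\rho(H')=A'$ and such that every cycle of $H'$ is simple.
   Context: An undirected graph $G=(V,E)$ without self-loops is complete $S$-multipartite if there is a map $\pi:V\to U$ such that for distinct $v,w\in V$, $(v,w)\in E$ iff $(\pi(v),\pi(w))\in F$; $M(w,S)$ denotes the complete $S$-multipartite graph with $|\pi^{-1}(u_i)|=w_i$. $\vec G$ replaces each edge $(v,w)$ by the directed edges $vw$ and $wv$. A Hamiltonian decomposition of a digraph is a spanning subgraph that is a node-disjoint union of directed cycles covering all nodes. For a Hamiltonian decomposition $H$ of $\vec G$ with $G$ on $n$ nodes, $\rho(H)=\frac1n[n_{ij}(H)]$ where $n_{ij}(H)$ counts edges of $H$ from $\pi^{-1}(u_i)$ to $\pi^{-1}(u_j)$. A directed cycle is simple if its image under $\pi$ is a cycle (no repeated nodes) of $\vec S$. $\mathcal{A}(S)$ is the set of nonnegative $q\times q$ matrices $A$ with $a_{ij}=0$ whenever $(u_i,u_j)\notin F$, $A\mathbf{1}=A^\top\mathbf{1}$, and $\mathbf{1}^\top A\mathbf{1}=1$. *)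

theory Defs
  imports Complex_Main
begin

text \<open>The graph S = (U,F) has node set U = {0..<q}; F is a symmetric set of pairs
  (self-loops allowed).  Matrices indexed by U are functions nat => nat => real,
  only the entries with indices < q matter.\<close>

definition in_calA :: "nat \<Rightarrow> (nat \<times> nat) set \<Rightarrow> (nat \<Rightarrow> nat \<Rightarrow> real) \<Rightarrow> bool" where
  "in_calA q F A \<longleftrightarrow>
     (\<forall>i<q. \<forall>j<q. 0 \<le> A i j \<and> ((i, j) \<notin> F \<longrightarrow> A i j = 0)) \<and>
     (\<forall>i<q. (\<Sum>j<q. A i j) = (\<Sum>j<q. A j i)) \<and>
     (\<Sum>i<q. \<Sum>j<q. A i j) = 1"

text \<open>Complete S-multipartite graph M(w,S): nodes are pairs (i,k) with k < w i,
  the map pi is fst; distinct nodes v, u are adjacent iff (pi v, pi u) \<in> F.\<close>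

definition mp_nodes :: "nat \<Rightarrow> (nat \<Rightarrow> nat) \<Rightarrow> (nat \<times> nat) set" where
  "mp_nodes q w = {(i, k). i < q \<and> k < w i}"

definition mp_arcs :: "nat \<Rightarrow> (nat \<times> nat) set \<Rightarrow> (nat \<Rightarrow> nat) \<Rightarrow> ((nat \<times> nat) \<times> (nat \<times> nat)) set" where
  "mp_arcs q F w = {(v, u). v \<in> mp_nodes q w \<and> u \<in> mp_nodes q w \<and> v \<noteq> u \<and> (fst v, fst u) \<in> F}"

text \<open>Hamiltonian decomposition: a spanning subgraph (set of arcs) in which every node
  has exactly one outgoing and exactly one incoming arc, i.e. a node-disjoint union of
  directed cycles covering all nodes.\<close>
definition ham_decomp :: "'v set \<Rightarrow> ('v \<times> 'v) set \<Rightarrow> ('v \<times> 'v) set \<Rightarrow> bool" where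
  "ham_decomp V Arcs H \<longleftrightarrow> H \<subseteq> Arcs \<and>
     (\<forall>v\<in>V. \<exists>!u. (v, u) \<in> H) \<and> (\<forall>v\<in>V. \<exists>!u. (u, v) \<in> H)"

definition cycle_nodes :: "('v \<times> 'v) set \<Rightarrow> 'v \<Rightarrow> 'v set" where
  "cycle_nodes H v = {u. (v, u) \<in> H\<^sup>*}"

definition all_cycles_simple :: "('v \<Rightarrow> 'u) \<Rightarrow> 'v set \<Rightarrow> ('v \<times> 'v) set \<Rightarrow> bool" where
  "all_cycles_simple \<pi> V H \<longleftrightarrow> (\<forall>v\<in>V. inj_on \<pi> (cycle_nodes H v))"

definition n_count :: "((nat \<times> nat) \<times> (nat \<times> nat)) set \<Rightarrow> nat \<Rightarrow> nat \<Rightarrow> nat" where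
  "n_count H i j = card {(v, u) \<in> H. fst v = i \<and> fst u = j}"

end

theory Submission
  imports Defs
begin

lemma mp_nodes_eq: "mp_nodes q w = Sigma {..<q} (\<lambda>i. {..<w i})"
  by (auto simp: mp_nodes_def)

lemma card_mp_nodes: "card (mp_nodes q w) = (\<Sum>i<q. w i)"
  by (simp add: mp_nodes_eq card_SigmaI)

lemma out_pos:
  fixes N :: "nat \<Rightarrow> nat \<Rightarrow> nat"
  assumes bal: "\<forall>i<q. (\<Sum>j<q. N i j) = (\<Sum>j<q. N j i)" and "a<q" "j<q" "N j a > 0"
  shows "\<exists>k<q. N a k > 0"
proof -
  have "N j a \<le> (\<Sum>k<q. N k a)" using assms by (intro member_le_sum) auto
  hence "(\<Sum>k<q. N a k) > 0" using assms by auto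
  thus ?thesis by (metis (no_types, lifting) gr0I sum.neutral lessThan_iff)
qed

lemma cycle_exists:
  fixes N :: "nat \<Rightarrow> nat \<Rightarrow> nat"
  assumes diag: "\<forall>i<q. N i i = 0" and bal: "\<forall>i<q. (\<Sum>j<q. N i j) = (\<Sum>j<q. N j i)"
    and i0: "i0<q" "j0<q" "N i0 j0 > 0"
  shows "\<exists>C R. C \<subseteq> {..<q} \<and> C \<noteq> {} \<and> R \<subseteq> C \<times> C \<and> (\<forall>a\<in>C. \<exists>!b. (a,b)\<in>R)
     \<and> (\<forall>b\<in>C. \<exists>!a. (a,b)\<in>R) \<and> (\<forall>(a,b)\<in>R. a \<noteq> b \<and> N a b > 0)"
proof -
  define step where "step a = (SOME k. k<q \<and> N a k > 0)" for a
  define f where "f n = (step ^^ n) i0" for n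
  have fS: "f (Suc n) = step (f n)" for n by (simp add: f_def)
  have stepP: "f (Suc n) < q \<and> N (f n) (f (Suc n)) > 0" if "\<exists>k<q. N (f n) k > 0" for n
  proof -
    have "\<exists>k. k<q \<and> N (f n) k > 0" using that by auto
    from someI_ex[OF this] show ?thesis unfolding fS step_def .
  qed
  have P: "f n < q \<and> (\<exists>k<q. N (f n) k > 0)" for n
  proof (induction n)
    case 0 show ?case using i0 by (auto simp: f_def)
  next
    case (Suc n)
    then have "f (Suc n) < q \<and> N (f n) (f (Suc n)) > 0" using stepP by blast
    then show ?case using out_pos[OF bal, of "f (Suc n)" "f n"] Suc by auto
  qed
  have fq: "f n < q" for n using P by blast
  have fN: "N (f n) (f (Suc n)) > 0" for n using P stepP by blast
  have "\<not> inj_on f {..q}"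
  proof
    assume "inj_on f {..q}"
    hence "card {..q} \<le> card {..<q}" by (rule card_inj_on_le) (use fq in auto)
    thus False by simp
  qed
  then obtain a b where "a \<noteq> b" "f a = f b" by (auto simp: inj_on_def)
  hence ex: "\<exists>n. \<exists>m<n. f m = f n" by (metis linorder_neqE_nat)
  obtain n where nP: "\<exists>m<n. f m = f n" and nmin: "\<And>n'. n' < n \<Longrightarrow> \<not>(\<exists>m<n'. f m = f n')"
    using ex exists_least_iff[of "\<lambda>n. \<exists>m<n. f m = f n"] by blast
  then obtain m where mn: "m<n" "f m = f n" by auto
  have inj: "inj_on f {..<n}"
  proof (rule inj_onI)
    fix x y assume "x \<in> {..<n}" "y \<in> {..<n}" "f x = f y"
    then show "x = y" using nmin by (metis lessThan_iff linorder_neqE_nat)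
  qed
  have injS: "inj_on (\<lambda>t. f (Suc t)) {m..<n}"
  proof (rule inj_onI)
    fix x y assume x: "x \<in> {m..<n}" and y: "y \<in> {m..<n}" and e: "f (Suc x) = f (Suc y)"
    show "x = y"
    proof (cases "Suc x < n \<and> Suc y < n")
      case True then show ?thesis using inj e by (auto simp: inj_on_def)
    next
      case False
      then have "Suc x = n \<or> Suc y = n" using x y by auto
      then show ?thesis
      proof
        assume "Suc x = n"
        show ?thesis
        proof (rule ccontr)
          assume "x \<noteq> y"
          then have "Suc y < n" "m < Suc y" using y \<open>Suc x = n\<close> by auto
          then have "f m = f (Suc y)" using e mn \<open>Suc x = n\<close> by simp
          then show False using inj \<open>Suc y < n\<close> \<open>m < Suc y\<close> mn by (auto simp: inj_on_def)
        qed
      next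
        assume "Suc y = n"
        show ?thesis
        proof (rule ccontr)
          assume "x \<noteq> y"
          then have "Suc x < n" "m < Suc x" using x \<open>Suc y = n\<close> by auto
          then have "f m = f (Suc x)" using e mn \<open>Suc y = n\<close> by simp
          then show False using inj \<open>Suc x < n\<close> \<open>m < Suc x\<close> mn by (auto simp: inj_on_def)
        qed
      qed
    qed
  qed
  have injm: "inj_on f {m..<n}" using inj by (rule inj_on_subset) auto
  define C where "C = f ` {m..<n}"
  define R where "R = (\<lambda>t. (f t, f (Suc t))) ` {m..<n}"
  have fSC: "f (Suc t) \<in> C" if "t \<in> {m..<n}" for t
  proof (cases "Suc t < n")
    case True then show ?thesis using that by (auto simp: C_def)
  next
    case False then have "Suc t = n" using that by auto
    have "f m \<in> C" using mn unfolding C_def by (intro imageI) simp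
    then show ?thesis using mn \<open>Suc t = n\<close> by simp
  qed
  have "C \<subseteq> {..<q}" using fq by (auto simp: C_def)
  moreover have "C \<noteq> {}" using mn by (auto simp: C_def)
  moreover have "R \<subseteq> C \<times> C" using fSC by (auto simp: R_def C_def)
  moreover have "\<forall>a\<in>C. \<exists>!b. (a,b)\<in>R"
  proof
    fix a assume "a \<in> C"
    then obtain t where t: "t \<in> {m..<n}" "a = f t" by (auto simp: C_def)
    show "\<exists>!b. (a,b)\<in>R"
    proof (rule ex1I[of _ "f (Suc t)"])
      show "(a, f (Suc t)) \<in> R" using t by (auto simp: R_def)
    next
      fix b assume "(a,b) \<in> R"
      then obtain t' where "t' \<in> {m..<n}" "a = f t'" "b = f (Suc t')" by (auto simp: R_def)
      then have "t' = t" using t injm unfolding inj_on_def by metis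
      then show "b = f (Suc t)" using \<open>b = f (Suc t')\<close> by simp
    qed
  qed
  moreover have "\<forall>b\<in>C. \<exists>!a. (a,b)\<in>R"
  proof
    fix b assume "b \<in> C"
    then obtain t where t: "t \<in> {m..<n}" "b = f t" by (auto simp: C_def)
    obtain s where s: "s \<in> {m..<n}" "f (Suc s) = b"
    proof (cases "t = m")
      case True
      then show ?thesis using that[of "n - 1"] t mn by auto
    next
      case False
      then have "Suc (t - 1) = t" using t by auto
      have "t - 1 \<in> {m..<n}" using t False by auto
      then show ?thesis using \<open>Suc (t - 1) = t\<close> t by (intro that[of "t - 1"]) auto
    qed
    show "\<exists>!a. (a,b)\<in>R"
    proof (rule ex1I[of _ "f s"])
      show "(f s, b) \<in> R" using s by (auto simp: R_def)
    next
      fix a assume "(a,b) \<in> R"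
      then obtain t' where "t' \<in> {m..<n}" "a = f t'" "b = f (Suc t')" by (auto simp: R_def)
      then have "t' = s" using s injS unfolding inj_on_def by metis
      then show "a = f s" using \<open>a = f t'\<close> by simp
    qed
  qed
  moreover have "\<forall>(a,b)\<in>R. a \<noteq> b \<and> N a b > 0"
    using fN fq diag by (auto simp: R_def) (metis less_irrefl)
  ultimately show ?thesis by blast
qed


lemma ex1_uniq: "\<exists>!x. P x \<Longrightarrow> P a \<Longrightarrow> P b \<Longrightarrow> a = b" by blast

lemma ex1_get: "\<forall>a\<in>C. \<exists>!b. P a b \<Longrightarrow> i \<in> C \<Longrightarrow> \<exists>b. P i b \<and> (\<forall>b'. P i b' \<longrightarrow> b' = b)"
  by (metis ex1_uniq)

lemma rt_stay:
  assumes "(v,u) \<in> (H1 \<union> H2)\<^sup>*" "v \<notin> X" "Domain H2 \<subseteq> X" "Range H1 \<inter> X = {}"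
  shows "(v,u) \<in> H1\<^sup>*"
  using assms(1)
proof (induction rule: rtrancl_induct)
  case base then show ?case by simp
next
  case (step y z)
  have "y \<notin> X"
  proof (cases "y = v")
    case True then show ?thesis using assms by simp
  next
    case False
    then have "y \<in> Range H1" using step(3) by (metis Range.intros rtranclE)
    then show ?thesis using assms by auto
  qed
  then have "(y,z) \<in> H1" using step(2) assms(3) by auto
  then show ?case using step(3) by simp
qed

lemma rt_into:
  assumes "(v,u) \<in> (H1 \<union> H2)\<^sup>*" "v \<in> X" "Domain H1 \<inter> X = {}" "Range H2 \<subseteq> X"
  shows "u \<in> X"
  using assms(1)
proof (induction rule: rtrancl_induct)
  case base then show ?case using assms by simp
next
  case (step y z)
  then show ?case using assms by auto
qed

lemma main:
  fixes N :: "nat \<Rightarrow> nat \<Rightarrow> nat"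
  assumes "\<forall>i<q. \<forall>j<q. N i j > 0 \<longrightarrow> (i,j) \<in> F" "\<forall>i<q. N i i = 0"
    "\<forall>i<q. (\<Sum>j<q. N i j) = (\<Sum>j<q. N j i)"
  shows "\<exists>H. ham_decomp (mp_nodes q (\<lambda>i. \<Sum>j<q. N i j)) (mp_arcs q F (\<lambda>i. \<Sum>j<q. N i j)) H
     \<and> (\<forall>i<q. \<forall>j<q. n_count H i j = N i j)
     \<and> all_cycles_simple fst (mp_nodes q (\<lambda>i. \<Sum>j<q. N i j)) H"
  using assms
proof (induction "\<Sum>i<q. \<Sum>j<q. N i j" arbitrary: N rule: less_induct)
  case less
  show ?case
  proof (cases "\<exists>i<q. \<exists>j<q. N i j > 0")
    case False
    hence z: "\<forall>i<q. \<forall>j<q. N i j = 0" by auto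
    hence "mp_nodes q (\<lambda>i. \<Sum>j<q. N i j) = {}" by (auto simp: mp_nodes_def)
    then show ?thesis using z
      by (intro exI[of _ "{}"]) (auto simp: ham_decomp_def n_count_def all_cycles_simple_def)
  next
    case True
    then obtain i0 j0 where ij: "i0<q" "j0<q" "N i0 j0 > 0" by auto
    obtain C R where C: "C \<subseteq> {..<q}" "C \<noteq> {}" and RC: "R \<subseteq> C \<times> C"
      and out1: "\<forall>a\<in>C. \<exists>!b. (a,b)\<in>R" and in1: "\<forall>b\<in>C. \<exists>!a. (a,b)\<in>R"
      and Rp: "\<forall>(a,b)\<in>R. a \<noteq> b \<and> N a b > 0"
      using cycle_exists[OF less.prems(2,3) ij] by blast
    have finC: "finite C" using C(1) by (rule finite_subset) simp
    define E where "E i j = (if (i,j) \<in> R then 1 else 0::nat)" for i j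
    define N' where "N' i j = N i j - E i j" for i j
    have NE: "N i j = N' i j + E i j" for i j
    proof (cases "(i,j) \<in> R")
      case True
      then have "N i j > 0" using Rp by blast
      then show ?thesis using True by (simp add: N'_def E_def)
    next
      case False
      then show ?thesis by (simp add: N'_def E_def)
    qed
    have rowE: "(\<Sum>j<q. E i j) = (if i\<in>C then 1 else 0)" for i
    proof (cases "i \<in> C")
      case True
      obtain b where b: "(i,b) \<in> R" "\<forall>b'. (i,b') \<in> R \<longrightarrow> b' = b" using ex1_get[OF out1 True] by blast
      have "b \<in> C" using b(1) RC by blast
      then have "b < q" using C by blast
      have "E i j = (if j = b then 1 else 0)" for j
      proof (cases "(i,j) \<in> R")
        case True
        then have "j = b" using b(2) by blast
        then show ?thesis using True by (simp add: E_def)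
      next
        case False
        then have "j \<noteq> b" using b(1) by blast
        then show ?thesis using False by (simp add: E_def)
      qed
      then have "(\<Sum>j<q. E i j) = (\<Sum>j<q. if j = b then 1 else 0)"
        by simp
      also have "\<dots> = 1" using \<open>b<q\<close> by (subst sum.delta) simp_all
      finally show ?thesis using True by simp
    next
      case False
      then have "E i j = 0" for j using RC by (auto simp: E_def)
      then show ?thesis using False by simp
    qed
    have colE: "(\<Sum>j<q. E j i) = (if i\<in>C then 1 else 0)" for i
    proof (cases "i \<in> C")
      case True
      obtain b where b: "(b,i) \<in> R" "\<forall>b'. (b',i) \<in> R \<longrightarrow> b' = b" using ex1_get[OF in1 True] by blast
      have "b \<in> C" using b(1) RC by blast
      then have "b < q" using C by blast
      have "E j i = (if j = b then 1 else 0)" for j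
      proof (cases "(j,i) \<in> R")
        case True
        then have "j = b" using b(2) by blast
        then show ?thesis using True by (simp add: E_def)
      next
        case False
        then have "j \<noteq> b" using b(1) by blast
        then show ?thesis using False by (simp add: E_def)
      qed
      then have "(\<Sum>j<q. E j i) = (\<Sum>j<q. if j = b then 1 else 0)"
        by simp
      also have "\<dots> = 1" using \<open>b<q\<close> by (subst sum.delta) simp_all
      finally show ?thesis using True by simp
    next
      case False
      then have "E j i = 0" for j using RC by (auto simp: E_def)
      then show ?thesis using False by simp
    qed
    define w where "w i = (\<Sum>j<q. N i j)" for i
    define w' where "w' i = (\<Sum>j<q. N' i j)" for i
    have ww: "w i = w' i + (if i\<in>C then 1 else 0)" for i
    proof -
      have "w i = (\<Sum>j<q. N' i j + E i j)" unfolding w_def by (intro sum.cong refl NE)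
      also have "\<dots> = w' i + (\<Sum>j<q. E i j)" unfolding w'_def by (rule sum.distrib)
      finally show ?thesis by (simp only: rowE)
    qed
    have colN: "(\<Sum>j<q. N j i) = (\<Sum>j<q. N' j i) + (if i\<in>C then 1 else 0)" for i
    proof -
      have "(\<Sum>j<q. N j i) = (\<Sum>j<q. N' j i + E j i)" by (intro sum.cong refl NE)
      also have "\<dots> = (\<Sum>j<q. N' j i) + (\<Sum>j<q. E j i)" by (rule sum.distrib)
      finally show ?thesis by (simp only: colE)
    qed
    have bal': "\<forall>i<q. (\<Sum>j<q. N' i j) = (\<Sum>j<q. N' j i)"
    proof (intro allI impI)
      fix i assume "i < q"
      then have "w i = (\<Sum>j<q. N j i)" using less.prems(3) unfolding w_def by blast
      then have "w' i = (\<Sum>j<q. N' j i)"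
        using ww[of i] colN[of i] by linarith
      then show "(\<Sum>j<q. N' i j) = (\<Sum>j<q. N' j i)" unfolding w'_def .
    qed
    have "(\<Sum>i<q. \<Sum>j<q. N i j) = (\<Sum>i<q. w' i + (if i\<in>C then 1 else 0))"
      unfolding w_def[symmetric] using ww by (intro sum.cong refl)
    also have "\<dots> = (\<Sum>i<q. w' i) + card C"
      using C by (simp add: sum.distrib sum.If_cases Int_absorb1)
    finally have tot: "(\<Sum>i<q. \<Sum>j<q. N i j) = (\<Sum>i<q. \<Sum>j<q. N' i j) + card C"
      unfolding w'_def .
    have "card C > 0" using finC C by auto
    then have lt: "(\<Sum>i<q. \<Sum>j<q. N' i j) < (\<Sum>i<q. \<Sum>j<q. N i j)" using tot by simp
    have F': "\<forall>i<q. \<forall>j<q. N' i j > 0 \<longrightarrow> (i,j) \<in> F" using less.prems(1) NE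
      by (metis add_gr_0)
    have D': "\<forall>i<q. N' i i = 0" using less.prems(2) NE by (metis add_is_0)
    obtain H1 where H1: "ham_decomp (mp_nodes q w') (mp_arcs q F w') H1"
      and cnt1: "\<forall>i<q. \<forall>j<q. n_count H1 i j = N' i j"
      and simp1: "all_cycles_simple fst (mp_nodes q w') H1"
      using less.hyps[OF lt F' D' bal'] unfolding w'_def by blast
    define V where "V = mp_nodes q w"
    define V' where "V' = mp_nodes q w'"
    define nv where "nv a = (a, w' a)" for a
    define H2 where "H2 = (\<lambda>(a,b). (nv a, nv b)) ` R"
    define H where "H = H1 \<union> H2"
    have nvV: "nv a \<in> V" if "a \<in> C" for a
      using that C ww by (auto simp: nv_def V_def mp_nodes_def)
    have nvV': "nv a \<notin> V'" for a by (auto simp: nv_def V'_def mp_nodes_def)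
    have V'V: "V' \<subseteq> V" using ww by (fastforce simp: V_def V'_def mp_nodes_def)
    have Vsplit: "V = V' \<union> nv ` C"
    proof
      show "V \<subseteq> V' \<union> nv ` C"
      proof
        fix v assume "v \<in> V"
        then obtain i k where v: "v = (i,k)" "i<q" "k < w i" by (auto simp: V_def mp_nodes_def)
        show "v \<in> V' \<union> nv ` C"
        proof (cases "k < w' i")
          case True then show ?thesis using v by (auto simp: V'_def mp_nodes_def)
        next
          case False
          then have "i \<in> C" "k = w' i" using v ww[of i] by (auto split: if_splits)
          then show ?thesis using v by (auto simp: nv_def)
        qed
      qed
    next
      show "V' \<union> nv ` C \<subseteq> V" using V'V nvV by auto
    qed
    have H1sub: "H1 \<subseteq> V' \<times> V'" using H1 by (auto simp: ham_decomp_def mp_arcs_def V'_def)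
    have H2sub: "H2 \<subseteq> nv ` C \<times> nv ` C" using RC by (auto simp: H2_def)
    have nvinj: "nv a = nv b \<Longrightarrow> a = b" for a b by (simp add: nv_def)
    have arcs: "H \<subseteq> mp_arcs q F w"
    proof -
      have "H1 \<subseteq> mp_arcs q F w" using H1 V'V
        by (auto simp: ham_decomp_def mp_arcs_def V'_def V_def)
      moreover have "H2 \<subseteq> mp_arcs q F w"
      proof
        fix e assume "e \<in> H2"
        then obtain a b where ab: "(a,b) \<in> R" "e = (nv a, nv b)" by (auto simp: H2_def)
        then have "a \<in> C" "b \<in> C" "a \<noteq> b" "N a b > 0" using RC Rp by auto
        moreover have "(a,b) \<in> F" using less.prems(1) C \<open>a \<in> C\<close> \<open>b \<in> C\<close> \<open>N a b > 0\<close> by blast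
        ultimately show "e \<in> mp_arcs q F w" using ab nvV
          by (auto simp: mp_arcs_def V_def nv_def)
      qed
      ultimately show ?thesis by (auto simp: H_def)
    qed
    have outH: "\<forall>v\<in>V. \<exists>!u. (v,u) \<in> H"
    proof
      fix v assume "v \<in> V"
      then consider "v \<in> V'" | a where "a \<in> C" "v = nv a" using Vsplit by blast
      then show "\<exists>!u. (v,u) \<in> H"
      proof cases
        case 1
        have ex: "\<exists>!u. (v,u) \<in> H1" using H1 1 unfolding ham_decomp_def V'_def by blast
        have "(v,u') \<notin> H2" for u' using H2sub 1 nvV' by blast
        then show ?thesis using ex unfolding H_def by blast
      next
        case 2
        obtain b where b: "(a,b) \<in> R" "\<forall>b'. (a,b') \<in> R \<longrightarrow> b' = b" using ex1_get[OF out1 2(1)] by blast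
        have no1: "(v,u') \<notin> H1" for u' using H1sub 2 nvV' by blast
        show ?thesis
        proof (rule ex1I[of _ "nv b"])
          have "(nv a, nv b) \<in> H2" unfolding H2_def using b(1) by (rule rev_image_eqI) simp
          then show "(v, nv b) \<in> H" using 2(2) by (simp add: H_def)
        next
          fix u assume "(v,u) \<in> H"
          then have "(v,u) \<in> H2" using no1 by (simp add: H_def)
          then obtain a' b' where ab: "(a',b') \<in> R" "v = nv a'" "u = nv b'" unfolding H2_def by auto
          then have "a' = a" using 2(2) nvinj by metis
          then have "b' = b" using ab(1) b(2) by blast
          then show "u = nv b" using ab(3) by simp
        qed
      qed
    qed
    have inH: "\<forall>v\<in>V. \<exists>!u. (u,v) \<in> H"
    proof
      fix v assume "v \<in> V"
      then consider "v \<in> V'" | a where "a \<in> C" "v = nv a" using Vsplit by blast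
      then show "\<exists>!u. (u,v) \<in> H"
      proof cases
        case 1
        have ex: "\<exists>!u. (u,v) \<in> H1" using H1 1 unfolding ham_decomp_def V'_def by blast
        have "(u',v) \<notin> H2" for u' using H2sub 1 nvV' by blast
        then show ?thesis using ex unfolding H_def by blast
      next
        case 2
        obtain b where b: "(b,a) \<in> R" "\<forall>b'. (b',a) \<in> R \<longrightarrow> b' = b" using ex1_get[OF in1 2(1)] by blast
        have no1: "(u',v) \<notin> H1" for u' using H1sub 2 nvV' by blast
        show ?thesis
        proof (rule ex1I[of _ "nv b"])
          have "(nv b, nv a) \<in> H2" unfolding H2_def using b(1) by (rule rev_image_eqI) simp
          then show "(nv b, v) \<in> H" using 2(2) by (simp add: H_def)
        next
          fix u assume "(u,v) \<in> H"
          then have "(u,v) \<in> H2" using no1 by (simp add: H_def)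
          then obtain a' b' where ab: "(b',a') \<in> R" "v = nv a'" "u = nv b'" unfolding H2_def by auto
          then have "a' = a" using 2(2) nvinj by metis
          then have "b' = b" using ab(1) b(2) by blast
          then show "u = nv b" using ab(3) by simp
        qed
      qed
    qed
    have finV': "finite V'" by (simp add: V'_def mp_nodes_eq)
    have finH1: "finite H1" using H1sub finV' finite_subset by blast
    have "finite (C \<times> C)" using finC by simp
    then have "finite R" using RC by (rule finite_subset[rotated])
    then have finH2: "finite H2" unfolding H2_def by (rule finite_imageI)
    have cnt: "n_count H i j = N i j" if "i<q" "j<q" for i j
    proof -
      let ?P = "\<lambda>(v,u). fst v = i \<and> fst u = j"
      have "{(v,u) \<in> H. fst v = i \<and> fst u = j} =
            {(v,u) \<in> H1. fst v = i \<and> fst u = j} \<union> {(v,u) \<in> H2. fst v = i \<and> fst u = j}"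
        by (auto simp: H_def)
      moreover have "{(v,u) \<in> H2. fst v = i \<and> fst u = j} = (if (i,j) \<in> R then {(nv i, nv j)} else {})"
        by (auto simp: H2_def nv_def)
      moreover have "{(v,u) \<in> H1. fst v = i \<and> fst u = j} \<inter> {(v,u) \<in> H2. fst v = i \<and> fst u = j} = {}"
        using H1sub H2sub nvV' by blast
      moreover have "finite {(v,u) \<in> H1. fst v = i \<and> fst u = j}" 
        by (rule finite_subset[OF _ finH1]) auto
      ultimately have "n_count H i j = n_count H1 i j + E i j"
        unfolding n_count_def E_def by (simp add: card_Un_disjoint)
      then show ?thesis using cnt1 that NE by simp
    qed
    have simpH: "all_cycles_simple fst V H"
      unfolding all_cycles_simple_def
    proof
      fix v assume "v \<in> V"
      then consider "v \<in> V'" | a where "a \<in> C" "v = nv a" using Vsplit by auto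
      then show "inj_on fst (cycle_nodes H v)"
      proof cases
        case 1
        have "cycle_nodes H v \<subseteq> cycle_nodes H1 v"
          unfolding cycle_nodes_def H_def
        proof
          fix u assume "u \<in> {u. (v, u) \<in> (H1 \<union> H2)\<^sup>*}"
          then have "(v,u) \<in> (H1 \<union> H2)\<^sup>*" by simp
          then have "(v,u) \<in> H1\<^sup>*"
            by (rule rt_stay[where X = "nv ` C"]) (use 1 nvV' H1sub H2sub in auto)
          then show "u \<in> {u. (v, u) \<in> H1\<^sup>*}" by simp
        qed
        moreover have "inj_on fst (cycle_nodes H1 v)" using simp1 1
          by (auto simp: all_cycles_simple_def V'_def)
        ultimately show ?thesis by (rule inj_on_subset[rotated])
      next
        case 2
        have "cycle_nodes H v \<subseteq> nv ` C"
          unfolding cycle_nodes_def H_def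
        proof
          fix u assume "u \<in> {u. (v, u) \<in> (H1 \<union> H2)\<^sup>*}"
          then have "(v,u) \<in> (H1 \<union> H2)\<^sup>*" by simp
          then show "u \<in> nv ` C"
            by (rule rt_into) (use 2 nvV' H1sub H2sub in auto)
        qed
        moreover have "inj_on fst (nv ` C)" by (auto simp: inj_on_def nv_def)
        ultimately show ?thesis by (rule inj_on_subset[rotated])
      qed
    qed
    have wdef: "w = (\<lambda>i. \<Sum>j<q. N i j)" by (rule ext) (simp add: w_def)
    have "ham_decomp V (mp_arcs q F w) H" unfolding ham_decomp_def using arcs outH inH by blast
    then show ?thesis using cnt simpH unfolding V_def wdef by blast
  qed
qed


lemma mp_nodes_cong: "(\<And>i. i < q \<Longrightarrow> w i = w' i) \<Longrightarrow> mp_nodes q w = mp_nodes q w'"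
  by (auto simp: mp_nodes_def)

lemma mp_arcs_cong: "(\<And>i. i < q \<Longrightarrow> w i = w' i) \<Longrightarrow> mp_arcs q F w = mp_arcs q F w'"
proof -
  assume "\<And>i. i < q \<Longrightarrow> w i = w' i"
  then have "mp_nodes q w = mp_nodes q w'" by (rule mp_nodes_cong)
  then show ?thesis by (simp add: mp_arcs_def)
qed

theorem lemma8:
  fixes q n' :: nat and F :: "(nat \<times> nat) set" and A :: "nat \<Rightarrow> nat \<Rightarrow> real"
  assumes "F \<subseteq> {..<q} \<times> {..<q}" and "sym F"
    and "in_calA q F A"
    and "\<forall>i<q. \<forall>j<q. real n' * A i j \<in> \<int>"
    and "\<forall>i<q. A i i = 0"
  shows "let x = (\<lambda>i. \<Sum>j<q. A i j);
             w = (\<lambda>i. nat \<lfloor>real n' * x i\<rfloor>);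
             V = mp_nodes q w
         in \<exists>H. ham_decomp V (mp_arcs q F w) H
               \<and> (\<forall>i<q. \<forall>j<q. real (n_count H i j) = real (card V) * A i j)
               \<and> all_cycles_simple fst V H"
proof -
  define N where "N i j = nat \<lfloor>real n' * A i j\<rfloor>" for i j
  have Apos: "A i j \<ge> 0" if "i<q" "j<q" for i j using assms(3) that by (simp add: in_calA_def)
  have AF: "A i j = 0" if "i<q" "j<q" "(i,j) \<notin> F" for i j using assms(3) that by (simp add: in_calA_def)
  have realN: "real (N i j) = real n' * A i j" if "i<q" "j<q" for i j
  proof -
    have "real n' * A i j \<in> \<int>" using assms(4) that by blast
    then obtain k where k: "real n' * A i j = of_int k" by (rule Ints_cases)
    have "real n' * A i j \<ge> 0" using Apos[OF that] by simp
    then have "k \<ge> 0" using k by simp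
    then show ?thesis using k by (simp add: N_def)
  qed
  have supp: "\<forall>i<q. \<forall>j<q. N i j > 0 \<longrightarrow> (i,j) \<in> F"
  proof (intro allI impI)
    fix i j assume ij: "i<q" "j<q" "N i j > 0"
    show "(i,j) \<in> F"
    proof (rule ccontr)
      assume "(i,j) \<notin> F"
      then have "A i j = 0" using AF ij by blast
      then have "real (N i j) = 0" using realN ij by simp
      then show False using ij by simp
    qed
  qed
  have diag: "\<forall>i<q. N i i = 0" using assms(5) by (simp add: N_def)
  have rowR: "real (\<Sum>j<q. N i j) = real n' * (\<Sum>j<q. A i j)" if "i<q" for i
    using realN that by (simp add: sum_distrib_left)
  have colR: "real (\<Sum>j<q. N j i) = real n' * (\<Sum>j<q. A j i)" if "i<q" for i
    using realN that by (simp add: sum_distrib_left)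
  have bal: "\<forall>i<q. (\<Sum>j<q. N i j) = (\<Sum>j<q. N j i)"
  proof (intro allI impI)
    fix i assume "i<q"
    have "(\<Sum>j<q. A i j) = (\<Sum>j<q. A j i)" using assms(3) \<open>i<q\<close> unfolding in_calA_def by blast
    then have "real (\<Sum>j<q. N i j) = real (\<Sum>j<q. N j i)"
      using rowR[OF \<open>i<q\<close>] colR[OF \<open>i<q\<close>] by simp
    then show "(\<Sum>j<q. N i j) = (\<Sum>j<q. N j i)" by (rule of_nat_eq_iff[THEN iffD1])
  qed
  define x where "x = (\<lambda>i. \<Sum>j<q. A i j)"
  define w where "w = (\<lambda>i. nat \<lfloor>real n' * x i\<rfloor>)"
  have ww: "w i = (\<Sum>j<q. N i j)" if "i<q" for i
  proof -
    have eq: "real n' * x i = real (\<Sum>j<q. N i j)" using rowR[OF that] unfolding x_def by simp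
    show ?thesis unfolding w_def by (simp only: eq floor_of_nat nat_int)
  qed
  have Veq: "mp_nodes q w = mp_nodes q (\<lambda>i. \<Sum>j<q. N i j)" by (rule mp_nodes_cong) (simp add: ww)
  have Aeq: "mp_arcs q F w = mp_arcs q F (\<lambda>i. \<Sum>j<q. N i j)" by (rule mp_arcs_cong) (simp add: ww)
  obtain H where H: "ham_decomp (mp_nodes q (\<lambda>i. \<Sum>j<q. N i j)) (mp_arcs q F (\<lambda>i. \<Sum>j<q. N i j)) H"
    and cnt: "\<forall>i<q. \<forall>j<q. n_count H i j = N i j"
    and sim: "all_cycles_simple fst (mp_nodes q (\<lambda>i. \<Sum>j<q. N i j)) H"
    using main[OF supp diag bal] by blast
  have "real (card (mp_nodes q w)) = real (\<Sum>i<q. \<Sum>j<q. N i j)"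
    unfolding Veq card_mp_nodes ..
  also have "\<dots> = (\<Sum>i<q. real (\<Sum>j<q. N i j))" by simp
  also have "\<dots> = (\<Sum>i<q. real n' * (\<Sum>j<q. A i j))" using rowR by simp
  also have "\<dots> = real n' * (\<Sum>i<q. \<Sum>j<q. A i j)" by (simp add: sum_distrib_left)
  also have "\<dots> = real n'"
  proof -
    have "(\<Sum>i<q. \<Sum>j<q. A i j) = 1" using assms(3) unfolding in_calA_def by blast
    then show ?thesis by simp
  qed
  finally have cardV: "real (card (mp_nodes q w)) = real n'" .
  have "\<forall>i<q. \<forall>j<q. real (n_count H i j) = real (card (mp_nodes q w)) * A i j"
  proof (intro allI impI)
    fix i j assume ij: "i<q" "j<q"
    then have "real (n_count H i j) = real (N i j)" using cnt by simp
    also have "\<dots> = real n' * A i j" using realN ij by simp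
    finally show "real (n_count H i j) = real (card (mp_nodes q w)) * A i j" using cardV by simp
  qed
  then have "\<exists>H. ham_decomp (mp_nodes q w) (mp_arcs q F w) H
               \<and> (\<forall>i<q. \<forall>j<q. real (n_count H i j) = real (card (mp_nodes q w)) * A i j)
               \<and> all_cycles_simple fst (mp_nodes q w) H"
    unfolding Veq Aeq using H sim by (intro exI[of _ H] conjI)
  then show ?thesis unfolding Let_def x_def w_def .
qed

end
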